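(* Let $q$ be an odd prime power and $m\geq 2$. Then the largest odd coset leader modulo $q^m-1$ is $\delta_1=(q-1)q^{m-1}-1$.
   Context: For $0\leq i\leq q^m-2$, the $q$-cyclotomic coset of $i$ modulo $q^m-1$ is $\{i,iq,iq^2,\ldots\}\bmod (q^m-1)$, and its smallest element is its coset leader. An odd coset leader is a coset leader that is an odd integer. *)

theory Defs
  imports "HOL-Computational_Algebra.Primes"
begin

definition cyc_coset :: "nat \<Rightarrow> nat \<Rightarrow> nat \<Rightarrow> nat set" where
  "cyc_coset q m i = {(i * q ^ j) mod (q ^ m - 1) | j. True}"

definition coset_leader :: "nat \<Rightarrow> nat \<Rightarrow> nat \<Rightarrow> bool" where
  "coset_leader q m i \<longleftrightarrow> i \<le> q ^ m - 2 \<and> i = Min (cyc_coset q m i)"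

definition odd_coset_leaders :: "nat \<Rightarrow> nat \<Rightarrow> nat set" where
  "odd_coset_leaders q m = {i. coset_leader q m i \<and> odd i}"

end

theory Submission
  imports Defs
begin

lemma mod_compl:
  fixes a b n :: nat
  assumes "0 < n" "(a + b) mod n = 0" "b mod n \<noteq> 0"
  shows "a mod n = n - b mod n"
proof -
  have "(a mod n + b mod n) mod n = 0" using assms(2) by (simp add: mod_add_eq)
  then obtain k where k: "a mod n + b mod n = n * k" by blast
  have "a mod n < n" "b mod n < n" using assms(1) by auto
  hence "n * k < n * 2" using k by linarith
  hence "k < 2" by simp
  moreover have "k \<noteq> 0" using k assms(3) by (metis add_is_0 mult_0_right)
  ultimately have "k = 1" by auto
  thus ?thesis using k by auto
qed

lemma pow_mod_cyc:
  fixes q m k :: nat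
  assumes "q ^ m \<ge> 3"
  shows "q ^ k mod (q ^ m - 1) = q ^ (k mod m) mod (q ^ m - 1)"
proof -
  define N where "N = q ^ m - 1"
  have e: "q ^ m = N + 1" using assms unfolding N_def by simp
  have g: "N > 1" using assms unfolding N_def by simp
  have "(N + 1) mod N = 1 mod N" by (simp only: add.commute[of N 1] mod_add_self2)
  hence qm: "q ^ m mod N = 1" using g e by simp
  have "q ^ k = (q ^ m) ^ (k div m) * q ^ (k mod m)"
  proof -
    have "q ^ k = q ^ (m * (k div m) + k mod m)" by simp
    thus ?thesis by (simp only: power_add power_mult)
  qed
  hence "q ^ k mod N = (((q ^ m) ^ (k div m) mod N) * (q ^ (k mod m) mod N)) mod N"
    by (simp add: mod_mult_eq)
  also have "(q ^ m) ^ (k div m) mod N = 1"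
  proof -
    have "(q ^ m) ^ (k div m) mod N = (q ^ m mod N) ^ (k div m) mod N" by (simp only: power_mod)
    also have "\<dots> = 1" using qm g by simp
    finally show ?thesis .
  qed
  finally show ?thesis unfolding N_def by simp
qed

lemma cyc_finite:
  assumes "q ^ m - 1 > (0::nat)"
  shows "finite (cyc_coset q m i)"
proof -
  have "cyc_coset q m i \<subseteq> {..<q ^ m - 1}" unfolding cyc_coset_def using assms by auto
  thus ?thesis using finite_subset by blast
qed

theorem lemma16:
  fixes q m :: nat
  assumes "\<exists>p k. prime p \<and> k \<ge> 1 \<and> q = p ^ k"
    and "odd q"
    and "m \<ge> 2"
  shows "(q - 1) * q ^ (m - 1) - 1 \<in> odd_coset_leaders q m \<and> (\<forall>i \<in> odd_coset_leaders q m. i \<le> (q - 1) * q ^ (m - 1) - 1)"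
proof -
  obtain p k where pk: "prime p" "k \<ge> 1" "q = p ^ k" using assms(1) by blast
  have "p \<ge> 2" using pk(1) prime_ge_2_nat by blast
  moreover have "p ^ 1 \<le> p ^ k" using pk(2) \<open>p \<ge> 2\<close> by (intro power_increasing) auto
  ultimately have "q \<ge> 2" using pk(3) by simp
  hence q3: "q \<ge> 3" using assms(2) by presburger
  define Q where "Q = q ^ (m - 1)"
  have mS: "m = Suc (m - 1)" using assms(3) by simp
  have qmQ: "q ^ m = q * Q" unfolding Q_def by (subst mS) (simp only: power_Suc)
  have "q ^ 1 \<le> q ^ (m - 1)" using assms(3) q3 by (intro power_increasing) auto
  hence Qq: "Q \<ge> q" unfolding Q_def by simp
  define N where "N = q ^ m - 1"
  have NqQ: "N = q * Q - 1" unfolding N_def qmQ ..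
  have qQ: "q * Q \<ge> 3 * Q" using q3 by simp
  define d where "d = (q - 1) * Q - 1"
  have dN: "d = N - Q" unfolding d_def NqQ by (simp add: diff_mult_distrib)
  have QN: "Q < N" unfolding NqQ using qQ Qq q3 by linarith
  have Npos: "N > 0" "Q < N" "d < N" using QN Qq q3 unfolding dN by auto
  have qm3: "q ^ m \<ge> 3" unfolding qmQ using qQ Qq q3 by linarith
  have fin: "\<And>i. finite (cyc_coset q m i)" using cyc_finite Npos unfolding N_def by blast
  have part1: "d \<in> odd_coset_leaders q m"
  proof -
    have ev: "even ((q - 1) * Q)" using assms(2) by simp
    have "(q - 1) * Q \<ge> 2 * 1" using q3 Qq by (intro mult_le_mono) auto
    hence od: "odd d" unfolding d_def using ev q3 Qq by (simp add: even_diff_nat)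
    have le: "d \<le> q ^ m - 2" using Npos Qq q3 unfolding dN N_def by simp
    have lb: "\<And>j. d * q ^ j mod N \<ge> d"
    proof -
      fix j
      have "d * q ^ j + Q * q ^ j = N * q ^ j" using Npos unfolding dN
        by (simp add: add_mult_distrib[symmetric])
      hence z: "(d * q ^ j + Q * q ^ j) mod N = 0" by simp
      have "Q * q ^ j = q ^ (m - 1 + j)" unfolding Q_def by (simp add: power_add)
      hence "Q * q ^ j mod N = q ^ ((m - 1 + j) mod m) mod N"
        using pow_mod_cyc[OF qm3] unfolding N_def by simp
      moreover have "q ^ ((m - 1 + j) mod m) \<le> Q" unfolding Q_def
        using q3 assms(3) by (intro power_increasing) (auto simp: less_Suc_eq_le[symmetric])
      moreover have "q ^ ((m - 1 + j) mod m) > 0" using q3 by simp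
      ultimately have r: "Q * q ^ j mod N \<le> Q" "Q * q ^ j mod N \<noteq> 0" using Npos by auto
      have "d * q ^ j mod N = N - Q * q ^ j mod N" using mod_compl[OF Npos(1) z r(2)] .
      thus "d * q ^ j mod N \<ge> d" using r(1) unfolding dN by simp
    qed
    have mem: "d \<in> cyc_coset q m d" unfolding cyc_coset_def N_def[symmetric]
      using Npos by (auto intro!: exI[of _ 0])
    have "d = Min (cyc_coset q m d)"
    proof (rule Min_eqI[symmetric, OF fin _ mem])
      fix y assume "y \<in> cyc_coset q m d"
      then obtain j where "y = d * q ^ j mod N" unfolding cyc_coset_def N_def by auto
      thus "d \<le> y" using lb by simp
    qed
    thus ?thesis using od le unfolding odd_coset_leaders_def coset_leader_def by blast
  qed
  have part2: "\<forall>i \<in> odd_coset_leaders q m. i \<le> d"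
  proof
    fix i assume "i \<in> odd_coset_leaders q m"
    hence il: "i \<le> q ^ m - 2" "i = Min (cyc_coset q m i)"
      unfolding odd_coset_leaders_def coset_leader_def by auto
    show "i \<le> d"
    proof (rule ccontr)
      assume "\<not> i \<le> d"
      hence gt: "i > d" by simp
      define y where "y = N - i"
      have y1: "y \<ge> 1" "y < Q" "i + y = N" using il(1) gt Npos unfolding y_def dN N_def by auto
      have ex: "\<exists>s. Q \<le> y * q ^ s"
      proof
        show "Q \<le> y * q ^ (m - 1)" unfolding Q_def using y1 by simp
      qed
      define s where "s = (LEAST s. Q \<le> y * q ^ s)"
      have s1: "Q \<le> y * q ^ s" unfolding s_def using LeastI_ex[OF ex] .
      have s0: "s \<noteq> 0" using s1 y1 by (cases s) auto
      have "\<not> Q \<le> y * q ^ (s - 1)" unfolding s_def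
        by (rule not_less_Least) (use s0 s_def in auto)
      hence "y * q ^ (s - 1) < Q" by simp
      hence "q * (y * q ^ (s - 1)) < q * Q" using q3 by simp
      moreover have "q * (y * q ^ (s - 1)) = y * q ^ s"
      proof -
        obtain t where "s = Suc t" using s0 by (cases s) auto
        thus ?thesis by simp
      qed
      ultimately have "y * q ^ s < q * Q" by linarith
      hence yl: "y * q ^ s \<le> N" unfolding NqQ by linarith
      have "y * q ^ s \<noteq> N"
      proof
        assume h: "y * q ^ s = N"
        have "q dvd y * q ^ s" using s0 by simp
        hence "q dvd q * Q - 1" using h NqQ by simp
        moreover have "q dvd q * Q" by simp
        ultimately have "q dvd q * Q - (q * Q - 1)" by (rule dvd_diff_nat[rotated])
        moreover have "q * Q - (q * Q - 1) = 1" using qQ Qq q3 by simp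
        ultimately have "q dvd 1" by simp
        thus False using q3 by simp
      qed
      hence yl2: "y * q ^ s < N" using yl by simp
      hence ymod: "y * q ^ s mod N = y * q ^ s" by simp
      have "y * q ^ s \<noteq> 0" using y1(1) q3 by simp
      have "i * q ^ s + y * q ^ s = N * q ^ s" using y1(3) by (simp add: add_mult_distrib[symmetric])
      hence z: "(i * q ^ s + y * q ^ s) mod N = 0" by simp
      have "i * q ^ s mod N = N - y * q ^ s"
        using mod_compl[OF Npos(1) z] ymod \<open>y * q ^ s \<noteq> 0\<close> by simp
      hence small: "i * q ^ s mod N < i" using s1 gt unfolding dN by simp
      have "i * q ^ s mod N \<in> cyc_coset q m i" unfolding cyc_coset_def N_def by auto
      hence "Min (cyc_coset q m i) \<le> i * q ^ s mod N" using fin by simp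
      thus False using small il(2) by simp
    qed
  qed
  show ?thesis using part1 part2 unfolding d_def Q_def by blast
qed

end
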